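(* Let $W$ be a polynomial, $\sigma>0$, and suppose $s$ with $\Re s<0$ is a quasinormal frequency in the sense of Leaver with $\sigma<(\Re\sqrt s)^2$, with corresponding nonzero solution $u(x)=\sum_{k\ge1}H_k(1-x)^k$. Then $u\in X^\sigma$. Consequently, if in addition $s\in\Omega_\sigma$, then $u$ is a nonzero element of $\mathcal D^\sigma$ with $\mathcal L_su=0$, i.e. $s$ is a quasinormal frequency in the sense that $\mathcal L_s:\mathcal D^\sigma\to Y^\sigma$ has nontrivial kernel.
   Context: For $|\arg z|<\pi$, $\sqrt z$ denotes the branch with $\Re\sqrt z>0$. $\mathcal L_su=\frac{d}{dx}(x^2\frac{du}{dx})+s\frac{du}{dx}-Wu$ on $I=(0,1)$. $s$ with $\Re s<0$ is a quasinormal frequency in the sense of Leaver if there is a solution $u$ of $\mathcal L_su=0$ of the form $u(x)=\sum_{k=1}^\infty H_k(1-x)^k$ with $\sup_k|H_ke^{2\sqrt{sk}}|<\infty$. For $\sigma>0$, $u\in C^\infty(\overline I)$, $k\in\{0,1,2\}$: $|u|^{0}_{\sigma,k,0}=\big(\sum_{n=0}^\infty\frac{\sigma^{2n}}{n!^2(n+1)!^2}n^{k}\int_0^1(x/\sigma)^k|\partial_x^nu|^2dx\big)^{1/2}$ (with $0^0:=1$), $\|u\|_{\sigma,0,0}=|u|^0_{\sigma,0,0}$, $[u]^0_\sigma=(\sum_{n=0}^\infty\frac{\sigma^{2n+1}}{n!^2(n+1)!^2}|u^{(n)}(0)|^2)^{1/2}$. $X^\sigma=\{u\in C^\infty(\overline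 I):u(1)=0,\ \|\partial_xu\|_{\sigma,0,0}+|\partial_xu|^0_{\sigma,1,0}+|\partial_xu|^0_{\sigma,2,0}+[\partial_xu]^0_\sigma<\infty\}$, $Y^\sigma=\{u\in C^\infty(\overline I):\|u\|_{\sigma,0,0}+|u|^0_{\sigma,1,0}+[u]^0_\sigma<\infty\}$, $\mathcal D^\sigma=\{u\in X^\sigma:\mathcal L_su\in Y^\sigma\}$. $\Omega^1_\sigma=\{s:\Re s\le0,\ \sigma<|\Im s|\}\cup\{s:\Re s>0,\ \sigma<|s|\}$; $\Omega^2_\sigma=\{s:\ \sigma<|s|+\Re s,\ \sigma>\frac{-\Re(s)|s|}{2(|s|+\Re s)}\}$; $\Omega^3_\sigma=\{s\neq0:\ \sigma(|s|-\sigma+\Re s)-(\sigma(1+\frac{\Re s}{|s|})+\frac12\Re s)^2>0\}$; $\Omega_\sigma=\Omega^1_\sigma\cap(\Omega^2_\sigma\cup\Omega^3_\sigma)$. *)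

theory Defs
  imports "HOL-Analysis.Analysis" "HOL-Computational_Algebra.Polynomial"
begin

text \<open>Closed interval [0,1] = closure of I = (0,1). Derivatives of functions on the
closed interval are taken within [0,1] (one-sided at the endpoints).\<close>

fun dnth :: "nat \<Rightarrow> (real \<Rightarrow> complex) \<Rightarrow> real \<Rightarrow> complex" where
  "dnth 0 f = f"
| "dnth (Suc n) f = (\<lambda>x. vector_derivative (dnth n f) (at x within {0..1}))"

definition smooth01 :: "(real \<Rightarrow> complex) \<Rightarrow> bool" where
  "smooth01 u \<longleftrightarrow> (\<forall>n. \<forall>x\<in>{0..1}. dnth n u differentiable (at x within {0..1}))"

definition Lop :: "complex poly \<Rightarrow> complex \<Rightarrow> (real \<Rightarrow> complex) \<Rightarrow> real \<Rightarrow> complex" where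
  "Lop W s u = (\<lambda>x. dnth 1 (\<lambda>y. complex_of_real (y^2) * dnth 1 u y) x
                     + s * dnth 1 u x - poly W (complex_of_real x) * u x)"

definition sn_term :: "real \<Rightarrow> nat \<Rightarrow> (real \<Rightarrow> complex) \<Rightarrow> nat \<Rightarrow> real" where
  "sn_term \<sigma> k u n = \<sigma>^(2*n) / ((fact n)^2 * (fact (n+1))^2) * real n ^ k *
      integral {0..1} (\<lambda>x. (x/\<sigma>)^k * (cmod (dnth n u x))^2)"

text \<open>|u|^0_{sigma,k,0} < infinity (nonnegative terms)\<close>
definition sn_fin :: "real \<Rightarrow> nat \<Rightarrow> (real \<Rightarrow> complex) \<Rightarrow> bool" where
  "sn_fin \<sigma> k u \<longleftrightarrow> summable (sn_term \<sigma> k u)"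

definition bd_fin :: "real \<Rightarrow> (real \<Rightarrow> complex) \<Rightarrow> bool" where
  "bd_fin \<sigma> u \<longleftrightarrow> summable (\<lambda>n. \<sigma>^(2*n+1) / ((fact n)^2 * (fact (n+1))^2) * (cmod (dnth n u 0))^2)"

definition Xsp :: "real \<Rightarrow> (real \<Rightarrow> complex) set" where
  "Xsp \<sigma> = {u. smooth01 u \<and> u 1 = 0 \<and> sn_fin \<sigma> 0 (dnth 1 u) \<and> sn_fin \<sigma> 1 (dnth 1 u)
               \<and> sn_fin \<sigma> 2 (dnth 1 u) \<and> bd_fin \<sigma> (dnth 1 u)}"

definition Ysp :: "real \<Rightarrow> (real \<Rightarrow> complex) set" where
  "Ysp \<sigma> = {u. smooth01 u \<and> sn_fin \<sigma> 0 u \<and> sn_fin \<sigma> 1 u \<and> bd_fin \<sigma> u}"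

definition Dsp :: "real \<Rightarrow> complex poly \<Rightarrow> complex \<Rightarrow> (real \<Rightarrow> complex) set" where
  "Dsp \<sigma> W s = {u \<in> Xsp \<sigma>. Lop W s u \<in> Ysp \<sigma>}"

definition Omega1 :: "real \<Rightarrow> complex set" where
  "Omega1 \<sigma> = {s. Re s \<le> 0 \<and> \<sigma> < \<bar>Im s\<bar>} \<union> {s. Re s > 0 \<and> \<sigma> < cmod s}"

definition Omega2 :: "real \<Rightarrow> complex set" where
  "Omega2 \<sigma> = {s. \<sigma> < cmod s + Re s \<and> \<sigma> > - Re s * cmod s / (2 * (cmod s + Re s))}"

definition Omega3 :: "real \<Rightarrow> complex set" where
  "Omega3 \<sigma> = {s. s \<noteq> 0 \<and>
     \<sigma> * (cmod s - \<sigma> + Re s) - (\<sigma> * (1 + Re s / cmod s) + Re s / 2)^2 > 0}"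

definition Omega :: "real \<Rightarrow> complex set" where
  "Omega \<sigma> = Omega1 \<sigma> \<inter> (Omega2 \<sigma> \<union> Omega3 \<sigma>)"

definition leaver_solution :: "complex poly \<Rightarrow> complex \<Rightarrow> (real \<Rightarrow> complex) \<Rightarrow> bool" where
  "leaver_solution W s u \<longleftrightarrow>
     (\<exists>H :: nat \<Rightarrow> complex.
        bdd_above (range (\<lambda>k. cmod (H (Suc k) * exp (2 * csqrt (s * of_nat (Suc k))))))
      \<and> (\<forall>x\<in>{0..1}. (\<lambda>k. H (Suc k) * complex_of_real (1 - x) ^ Suc k) sums u x)
      \<and> (\<forall>x\<in>{0<..<1}. Lop W s u x = 0))"

end

theory Submission imports Defs begin

lemma exp_ge_pow_fact:
  fixes y :: real assumes "y \<ge> 0"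
  shows "y ^ j / fact j \<le> exp y"
proof -
  have "(\<Sum>n\<in>{j}. y ^ n / fact n) \<le> (\<Sum>n. y ^ n / fact n)"
    using assms summable_exp_generic[of y]
    by (intro sum_le_suminf) (auto simp: divide_inverse ac_simps)
  then show ?thesis by (simp add: exp_def divide_inverse ac_simps)
qed

lemma fact_double_le: "(fact (2*j) :: real) \<le> 4^j * (fact j)^2"
proof -
  have "fact j * fact (2*j - j) * (2*j choose j) = (fact (2*j) :: nat)"
    by (rule binomial_fact_lemma) simp
  moreover have "(2*j choose j) \<le> 2^(2*j)" by (rule binomial_le_pow2)
  ultimately have "fact (2*j) \<le> (fact j)^2 * (2::nat)^(2*j)"
    by (metis mult.commute mult_le_mono2 power2_eq_square diff_mult_distrib mult_2 add_diff_cancel_left')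
  hence "real (fact (2*j)) \<le> real ((fact j)^2 * (2::nat)^(2*j))" by linarith
  moreover have "(2::real)^(2*j) = 4^j" by (simp add: power_mult)
  ultimately show ?thesis by (simp add: mult.commute)
qed

lemma poly_geo_summable:
  fixes q :: real assumes "0 \<le> q" "q < 1"
  shows "summable (\<lambda>n. (real ((n+1)*(n+2)*(n+3)))^4 * q^n)"
proof -
  have "conv_radius (\<lambda>n. (real ((n+1)*(n+2)*(n+3)))^4) = 1"
  proof (rule conv_radius_ratio_limit_nonzero[of _ 1])
    show "(\<lambda>n. norm ((real ((n+1)*(n+2)*(n+3)))^4) / norm ((real ((Suc n+1)*(Suc n+2)*(Suc n+3)))^4)) \<longlonglongrightarrow> 1"
      by (simp add: power_divide[symmetric]) real_asymp
  qed auto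
  thus ?thesis using assms by (intro summable_in_conv_radius) auto
qed

lemma csqrt_nat: assumes "Re (csqrt s) > 0" shows "csqrt (s * of_nat k) = of_real (sqrt (real k)) * csqrt s"
proof (cases "k = 0")
  case True thus ?thesis by simp
next
  case False
  show ?thesis
  proof (rule csqrt_unique)
    show "(complex_of_real (sqrt (real k)) * csqrt s)\<^sup>2 = s * of_nat k"
      by (simp add: power_mult_distrib power2_csqrt flip: of_real_power)
    show "0 < Re (complex_of_real (sqrt (real k)) * csqrt s) \<or> Re (complex_of_real (sqrt (real k)) * csqrt s) = 0 \<and> 0 \<le> Im (complex_of_real (sqrt (real k)) * csqrt s)"
      using assms False by simp
  qed
qed

definition Fs :: "(nat \<Rightarrow> complex) \<Rightarrow> complex \<Rightarrow> complex" where
  "Fs c z = (\<Sum>k. c k * z ^ k)"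

lemma Fs_deriv:
  assumes s0: "summable (\<lambda>k. norm (c k))" and s1: "summable (\<lambda>k. norm (diffs c k))"
    and z: "z \<in> cball 0 1"
  shows "(Fs c has_field_derivative Fs (diffs c) z) (at z within cball 0 1)"
proof -
  define f' where "f' = (\<lambda>n (z::complex). of_nat n * c n * z^(n-1))"
  have M: "summable (\<lambda>n. norm (of_nat n * c n))"
  proof -
    have "summable (\<lambda>n. norm (of_nat (Suc n) * c (Suc n)))" using s1 by (simp add: diffs_def)
    thus ?thesis by (subst summable_Suc_iff[symmetric]) simp
  qed
  have ul: "uniform_limit (cball 0 1) (\<lambda>n x. \<Sum>i<n. f' i x) (\<lambda>x. suminf (\<lambda>i. f' i x)) sequentially"
  proof (rule Weierstrass_m_test[OF _ M])
    fix n and x :: complex assume "x \<in> cball 0 1"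
    hence "norm x \<le> 1" by simp
    hence "norm x ^ (n-1) \<le> 1" by (simp add: power_le_one)
    thus "norm (f' n x) \<le> norm (of_nat n * c n)"
      unfolding f'_def norm_mult norm_power
      using mult_left_le[of "norm x ^ (n-1)" "real n * norm (c n)"] by simp
  qed
  have "\<exists>g. \<forall>x\<in>cball 0 1. (\<lambda>n. c n * x^n) sums g x \<and> (g has_field_derivative (suminf (\<lambda>i. f' i x))) (at x within cball 0 1)"
  proof (rule has_field_derivative_series[OF _ _ ul])
    show "convex (cball (0::complex) 1)" by simp
    show "((\<lambda>x. c n * x ^ n) has_field_derivative f' n x) (at x within cball 0 1)" for n x
      unfolding f'_def by (auto intro!: derivative_eq_intros)
    show "(0::complex) \<in> cball 0 1" by simp
    show "summable (\<lambda>n. c n * 0 ^ n)" by simp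
  qed
  then obtain g where g: "\<And>x. x \<in> cball 0 1 \<Longrightarrow> (\<lambda>n. c n * x^n) sums g x \<and> (g has_field_derivative (suminf (\<lambda>i. f' i x))) (at x within cball 0 1)" by blast
  have bnd: "norm (f' n x) \<le> norm (of_nat n * c n)" if "x \<in> cball 0 1" for n x
  proof -
    from that have "norm x \<le> 1" by simp
    hence "norm x ^ (n-1) \<le> 1" by (simp add: power_le_one)
    thus ?thesis
      unfolding f'_def norm_mult norm_power
      using mult_left_le[of "norm x ^ (n-1)" "real n * norm (c n)"] by simp
  qed
  have eq: "suminf (\<lambda>i. f' i z) = Fs (diffs c) z"
  proof -
    have e1: "(\<lambda>i. f' (Suc i) z) = (\<lambda>i. diffs c i * z^i)"
      by (auto simp: f'_def diffs_def)
    have "summable (\<lambda>i. f' i z)"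
      by (rule summable_norm_cancel, rule summable_comparison_test[OF _ M]) (use bnd z in auto)
    hence "(\<lambda>i. f' i z) sums suminf (\<lambda>i. f' i z)" by (simp add: summable_sums)
    hence "(\<lambda>i. f' (Suc i) z) sums suminf (\<lambda>i. f' i z)"
      by (subst sums_Suc_iff) (simp add: f'_def)
    thus ?thesis unfolding e1 Fs_def by (simp add: sums_iff)
  qed
  have "(g has_field_derivative Fs (diffs c) z) (at z within cball 0 1)" using g[OF z] eq by simp
  moreover have "\<And>x. x \<in> cball 0 1 \<Longrightarrow> Fs c x = g x" using g by (simp add: Fs_def sums_iff)
  ultimately show ?thesis unfolding has_field_derivative_def
    by (rule has_derivative_transform[OF z, rotated])
qed
lemma P_deriv:
  assumes s0: "summable (\<lambda>k. norm (d k))" and s1: "summable (\<lambda>k. norm (diffs d k))"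
    and x: "x \<in> {0..1::real}"
  shows "((\<lambda>x. Fs d (of_real (1-x))) has_vector_derivative (- Fs (diffs d) (of_real (1-x)))) (at x within {0..1})"
proof -
  have sub: "(\<lambda>x. complex_of_real (1-x)) ` {0..1} \<subseteq> cball 0 1" by (auto simp: cmod_def)
  have f: "((\<lambda>x. complex_of_real (1-x)) has_vector_derivative (-1)) (at x within {0..1})"
    by (auto intro!: derivative_eq_intros)
  have "of_real (1-x) \<in> cball (0::complex) 1" using x by (auto simp: cmod_def)
  from Fs_deriv[OF s0 s1 this] have "(Fs d has_field_derivative Fs (diffs d) (of_real (1-x))) (at (of_real (1-x)) within (\<lambda>x. complex_of_real (1-x)) ` {0..1})"
    using has_field_derivative_subset[OF _ sub] by blast
  from field_vector_diff_chain_within[OF f this] show ?thesis by (simp add: o_def)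
qed

lemma diffs_iter_bound: fixes c :: "nat \<Rightarrow> complex" shows "norm ((diffs^^n) c k) \<le> real (k+n)^n * norm (c (k+n))"
proof (induction n arbitrary: k)
  case 0 thus ?case by simp
next
  case (Suc n)
  have "norm ((diffs^^Suc n) c k) = real (Suc k) * norm ((diffs^^n) c (Suc k))"
    by (simp add: diffs_def norm_mult del: of_nat_Suc)
  also have "\<dots> \<le> real (Suc k) * (real (Suc k+n)^n * norm (c (Suc k+n)))"
    using Suc.IH[of "Suc k"] by (intro mult_left_mono) auto
  also have "\<dots> \<le> real (k+Suc n)^(Suc n) * norm (c (k+Suc n))"
  proof -
    have "real (Suc k) \<le> real (k + Suc n)" by simp
    hence "real (Suc k) * real (k+Suc n)^n \<le> real (k+Suc n) * real (k+Suc n)^n"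
      by (intro mult_right_mono) auto
    thus ?thesis by (simp add: mult.assoc[symmetric] mult_right_mono)
  qed
  finally show ?case .
qed

lemma diffs_iter_summable:
  fixes c :: "nat \<Rightarrow> complex"
  assumes "summable (\<lambda>m. real m ^ n * norm (c m))"
  shows "summable (\<lambda>k. norm ((diffs^^n) c k))"
    and "(\<Sum>k. norm ((diffs^^n) c k)) \<le> (\<Sum>m. real m ^ n * norm (c m))"
proof -
  have sh: "summable (\<lambda>k. real (k+n) ^ n * norm (c (k+n)))"
    using summable_ignore_initial_segment[OF assms, of n] by simp
  show sm: "summable (\<lambda>k. norm ((diffs^^n) c k))"
    using diffs_iter_bound[of n c] by (intro summable_comparison_test[OF _ sh]) (auto intro!: exI[of _ 0])
  have "(\<Sum>k. norm ((diffs^^n) c k)) \<le> (\<Sum>k. real (k+n) ^ n * norm (c (k+n)))"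
    by (rule suminf_le[OF _ sm sh]) (rule diffs_iter_bound)
  also have "\<dots> = (\<Sum>m. real m ^ n * norm (c m)) - (\<Sum>i<n. real i ^ n * norm (c i))"
    using suminf_minus_initial_segment[OF assms, of n] by simp
  also have "\<dots> \<le> (\<Sum>m. real m ^ n * norm (c m))"
    by (simp add: sum_nonneg)
  finally show "(\<Sum>k. norm ((diffs^^n) c k)) \<le> (\<Sum>m. real m ^ n * norm (c m))" .
qed

lemma Fs_bound:
  assumes "summable (\<lambda>k. norm (d k))" "norm z \<le> 1"
  shows "norm (Fs d z) \<le> (\<Sum>k. norm (d k))"
proof -
  have b: "norm (d k * z^k) \<le> norm (d k)" for k
    using assms(2) mult_left_le[of "norm z ^ k" "norm (d k)"] by (simp add: norm_mult norm_power power_le_one)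
  have s: "summable (\<lambda>k. norm (d k * z^k))"
    by (rule summable_comparison_test[OF _ assms(1)]) (use b in auto)
  have "norm (Fs d z) \<le> (\<Sum>k. norm (d k * z^k))" unfolding Fs_def by (rule summable_norm[OF s])
  also have "\<dots> \<le> (\<Sum>k. norm (d k))" by (rule suminf_le[OF b s assms(1)])
  finally show ?thesis .
qed

lemma dnth_add: "dnth n (dnth m f) = dnth (n+m) f"
  by (induction n) auto
lemma coef_point:
  fixes c :: "nat \<Rightarrow> complex"
  assumes a: "a > 0" and C: "C \<ge> 0" and m: "m \<ge> 1"
    and cb: "norm (c m) \<le> C * exp (-2*a * sqrt (real m))"
  shows "real m ^ p * norm (c m) \<le> C * ((fact (p+2))^2 / a^(2*(p+2))) * inverse (real m ^ 2)"
proof -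
  define j where "j = 2*(p+2)"
  define y where "y = 2*a * sqrt (real m)"
  have y0: "y \<ge> 0" using a by (simp add: y_def)
  have mpos: "real m > 0" using m by simp
  have sq: "sqrt (real m) ^ j = real m ^ (p+2)"
    unfolding j_def power_mult by simp
  have yj: "y^j = (2*a)^j * real m ^ (p+2)"
    unfolding y_def power_mult_distrib sq[symmetric] by simp
  have "y^j / fact j \<le> exp y" by (rule exp_ge_pow_fact[OF y0])
  hence e: "exp (-y) \<le> fact j / ((2*a)^j * real m ^ (p+2))"
    using a mpos by (simp add: exp_minus yj field_simps)
  have "real m ^ p * norm (c m) \<le> real m ^ p * (C * exp (-y))"
    using cb by (intro mult_left_mono) (auto simp: y_def)
  also have "\<dots> \<le> real m ^ p * (C * (fact j / ((2*a)^j * real m ^ (p+2))))"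
    using e C by (intro mult_left_mono) auto
  also have "\<dots> = C * (fact j / (2*a)^j) * inverse (real m ^ 2)"
    using mpos a by (simp add: field_simps power_add power2_eq_square)
  also have "\<dots> \<le> C * ((fact (p+2))^2 / a^(2*(p+2))) * inverse (real m ^ 2)"
  proof -
    have "fact j / (2*a)^j \<le> (4^(p+2) * (fact (p+2))^2) / (2*a)^j"
      unfolding j_def using a by (intro divide_right_mono fact_double_le) auto
    also have "\<dots> = (fact (p+2))^2 / a^(2*(p+2))"
      using a by (simp add: j_def power_mult_distrib power_mult)
    finally show ?thesis using C mpos by (intro mult_right_mono mult_left_mono) auto
  qed
  finally show ?thesis .
qed

lemma coef_sum:
  fixes c :: "nat \<Rightarrow> complex"
  assumes a: "a > 0" and C: "C \<ge> 0" and c0: "c 0 = 0"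
    and cb: "\<And>m. m \<ge> 1 \<Longrightarrow> norm (c m) \<le> C * exp (-2*a * sqrt (real m))"
  shows "summable (\<lambda>m. real m ^ p * norm (c m))"
    and "(\<Sum>m. real m ^ p * norm (c m)) \<le> C * (\<Sum>m. inverse (real m ^ 2)) * ((fact (p+2))^2 / a^(2*(p+2)))"
proof -
  define K where "K = C * ((fact (p+2))^2 / a^(2*(p+2)))"
  have Z: "summable (\<lambda>m. inverse (real m ^ 2))" by (rule inverse_power_summable) simp
  have b: "real m ^ p * norm (c m) \<le> K * inverse (real m ^ 2)" for m
  proof (cases "m = 0")
    case True thus ?thesis using c0 by simp
  next
    case False thus ?thesis unfolding K_def using coef_point[of a C m c p] a C cb[of m] by simp
  qed
  have sK: "summable (\<lambda>m. K * inverse (real m ^ 2))" using Z by (rule summable_mult)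
  show sm: "summable (\<lambda>m. real m ^ p * norm (c m))"
    by (rule summable_comparison_test[OF _ sK]) (use b in auto)
  have "(\<Sum>m. real m ^ p * norm (c m)) \<le> (\<Sum>m. K * inverse (real m ^ 2))"
    by (rule suminf_le[OF b sm sK])
  also have "\<dots> = K * (\<Sum>m. inverse (real m ^ 2))" by (rule suminf_mult[OF Z])
  finally show "(\<Sum>m. real m ^ p * norm (c m)) \<le> C * (\<Sum>m. inverse (real m ^ 2)) * ((fact (p+2))^2 / a^(2*(p+2)))"
    by (simp add: K_def ac_simps)
qed
lemma key_summable:
  fixes \<sigma> a A :: real and B :: "nat \<Rightarrow> real"
  assumes s0: "\<sigma> > 0" and a0: "a > 0" and sa: "\<sigma> < a^2" and A: "A \<ge> 0"
    and B0: "\<And>p. B p \<ge> 0" and Bb: "\<And>p. B p \<le> A * (fact (p+2))^2 / a^(2*(p+2))"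
  shows "summable (\<lambda>n. \<sigma>^(2*n) * (real n + 1)^2 * (B (n+1))^2 / ((fact n)^2 * (fact (n+1))^2))"
proof -
  define q where "q = (\<sigma>/a^2)^2"
  have q0: "0 \<le> q" and q1: "q < 1" using s0 a0 sa by (auto simp: q_def power_less_one_iff)
  have G: "summable (\<lambda>n. A^2 / a^12 * ((real ((n+1)*(n+2)*(n+3)))^4 * q^n))"
    by (rule summable_mult[OF poly_geo_summable[OF q0 q1]])
  show ?thesis
  proof (rule summable_comparison_test[OF _ G], intro exI[of _ 0] allI impI)
    fix n :: nat
    define F where "F = (fact n :: real)"
    define X where "X = real ((n+1)*(n+2)*(n+3))"
    have F0: "F > 0" by (simp add: F_def)
    have f3: "fact (n+1+2) = X * F" by (simp add: F_def X_def fact_Suc numeral_3_eq_3 numeral_2_eq_2 algebra_simps)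
    have f1: "fact (n+1) = (real n + 1) * F" by (simp add: F_def fact_Suc algebra_simps)
    have den: "(F^2 * ((real n + 1) * F)^2) = F^4 * (real n + 1)^2"
      by (simp add: power_mult_distrib eval_nat_numeral)
    have Bn: "(B (n+1))^2 \<le> (A * (X*F)^2 / a^(2*(n+1+2)))^2"
      using Bb[of "n+1"] B0[of "n+1"] f3 by (intro power_mono) auto
    have "norm (\<sigma>^(2*n) * (real n + 1)^2 * (B (n+1))^2 / ((fact n)^2 * (fact (n+1))^2))
        = \<sigma>^(2*n) * (real n + 1)^2 * (B (n+1))^2 / ((fact n)^2 * (fact (n+1))^2)"
      using s0 by simp
    also have "\<dots> \<le> \<sigma>^(2*n) * (real n + 1)^2 * (A * (X*F)^2 / a^(2*(n+1+2)))^2 / ((fact n)^2 * (fact (n+1))^2)"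
      using Bn s0 by (intro divide_right_mono mult_left_mono) auto
    also have "\<dots> = A^2 / a^12 * (X^4 * q^n)"
      unfolding f1 F_def[symmetric] q_def den using F0 a0
      by (simp add: field_simps power_mult_distrib power_add power_mult flip: power_mult)
    finally show "norm (\<sigma>^(2*n) * (real n + 1)^2 * (B (n+1))^2 / ((fact n)^2 * (fact (n+1))^2))
        \<le> A^2 / a^12 * ((real ((n+1)*(n+2)*(n+3)))^4 * q^n)" unfolding X_def .
  qed
qed
lemma vd01: assumes "x \<in> {0..1::real}" "(f has_vector_derivative f') (at x within {0..1})"
  shows "vector_derivative f (at x within {0..1}) = f'"
  using vector_derivative_within_cbox[of 0 1 x f f'] assms by (simp add: cbox_interval)

lemma zero_dnth:
  assumes "\<forall>x\<in>{0..1::real}. f x = 0"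
  shows "\<forall>x\<in>{0..1}. dnth n f x = 0 \<and> (dnth n f has_vector_derivative 0) (at x within {0..1})"
proof (induction n)
  case 0
  show ?case using assms by (auto intro: has_vector_derivative_transform[of _ _ _ "\<lambda>_. 0"])
next
  case (Suc n)
  have z: "dnth (Suc n) f x = 0" if "x \<in> {0..1}" for x
    using Suc that vd01[of x "dnth n f" 0] by simp
  show ?case using z by (auto intro: has_vector_derivative_transform[of _ _ _ "\<lambda>_. 0"])
qed

lemma zero_in_Ysp:
  assumes "\<forall>x\<in>{0..1::real}. f x = 0"
  shows "f \<in> Ysp \<sigma>"
proof -
  note Z = zero_dnth[OF assms]
  have st: "sn_term \<sigma> k f n = 0" for k n
  proof -
    have "integral {0..1} (\<lambda>x. (x/\<sigma>)^k * (cmod (dnth n f x))^2) = integral {0..1} (\<lambda>x::real. 0::real)"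
      by (rule Henstock_Kurzweil_Integration.integral_cong) (use Z in simp)
    thus ?thesis by (simp add: sn_term_def)
  qed
  have st': "sn_term \<sigma> k f = (\<lambda>_. 0)" for k by (rule ext) (rule st)
  have "dnth n f 0 = 0" for n using Z by simp
  thus ?thesis using Z unfolding Ysp_def smooth01_def sn_fin_def bd_fin_def st'
    by (auto intro: differentiableI_vector simp: st')
qed

lemma int01_bound:
  fixes g :: "real \<Rightarrow> real"
  assumes "\<And>x. x \<in> {0..1::real} \<Longrightarrow> 0 \<le> g x \<and> g x \<le> M"
  shows "0 \<le> integral {0..1} g \<and> integral {0..1} g \<le> M"
proof (cases "g integrable_on {0..1}")
  case True
  have "integral {0..1} g \<le> integral {0..1} (\<lambda>x::real. M)"
    by (rule integral_le) (use True assms in auto)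
  thus ?thesis using integral_nonneg[OF True] assms by auto
next
  case False
  have "0 \<le> M" using assms[of 0] by auto
  thus ?thesis using False by (simp add: not_integrable_integral)
qed
theorem mainTheorem18:
  fixes W :: "complex poly" and \<sigma> :: real and s :: complex and u :: "real \<Rightarrow> complex"
  assumes "\<sigma> > 0" and "Re s < 0" and "\<sigma> < (Re (csqrt s))^2"
    and "leaver_solution W s u"
    and "\<exists>x\<in>{0<..<1}. u x \<noteq> 0"
  shows "u \<in> Xsp \<sigma> \<and>
         (s \<in> Omega \<sigma> \<longrightarrow> u \<in> Dsp \<sigma> W s \<and> (\<forall>x\<in>{0..1}. Lop W s u x = 0)
                          \<and> (\<exists>x\<in>{0..1}. u x \<noteq> 0))"
proof -
  note s0 = assms(1) and sa0 = assms(3)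
  obtain H :: "nat \<Rightarrow> complex" where
    Hb: "bdd_above (range (\<lambda>k. cmod (H (Suc k) * exp (2 * csqrt (s * of_nat (Suc k))))))"
    and Hs: "\<forall>x\<in>{0..1}. (\<lambda>k. H (Suc k) * complex_of_real (1 - x) ^ Suc k) sums u x"
    and HL: "\<forall>x\<in>{0<..<1}. Lop W s u x = 0"
    using assms(4) unfolding leaver_solution_def by blast
  define a where "a = Re (csqrt s)"
  have a0: "a > 0"
  proof -
    have "a \<ge> 0" unfolding a_def by (rule Re_csqrt)
    moreover have "a \<noteq> 0" using s0 sa0 unfolding a_def by auto
    ultimately show ?thesis by simp
  qed
  have sa: "\<sigma> < a^2" using sa0 by (simp add: a_def)
  obtain C where CB: "\<And>k. cmod (H (Suc k) * exp (2 * csqrt (s * of_nat (Suc k)))) \<le> C"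
    using Hb unfolding bdd_above_def by auto
  have C0: "C \<ge> 0" using CB[of 0] norm_ge_zero order_trans by blast
  define c where "c = (\<lambda>m. if m = 0 then 0 else H m)"
  have c0: "c 0 = 0" by (simp add: c_def)
  have cb: "norm (c m) \<le> C * exp (-2*a * sqrt (real m))" if m: "m \<ge> 1" for m
  proof -
    obtain k where k: "m = Suc k" using m by (cases m) auto
    have "cmod (exp (2 * csqrt (s * of_nat m))) = exp (2 * a * sqrt (real m))"
      using csqrt_nat[of s m] a0 by (simp add: a_def norm_exp_eq_Re)
    hence "norm (H m) * exp (2 * a * sqrt (real m)) \<le> C"
      using CB[of k] k by (simp add: norm_mult mult.assoc)
    hence "norm (H m) \<le> C / exp (2 * a * sqrt (real m))" by (simp add: field_simps)
    thus ?thesis using m by (simp add: c_def exp_minus field_simps)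
  qed
  define Z where "Z = (\<Sum>m. inverse (real m ^ 2))"
  have Z0: "Z \<ge> 0" unfolding Z_def
    by (intro suminf_nonneg inverse_power_summable) auto
  define A where "A = C * Z"
  have A0: "A \<ge> 0" using C0 Z0 by (simp add: A_def)
  note cs = coef_sum[OF a0 C0 c0 cb]
  define D where "D n = (diffs^^n) c" for n
  have Dsum: "summable (\<lambda>k. norm (D n k))" for n
    unfolding D_def by (rule diffs_iter_summable(1)[OF cs(1)])
  have DSuc: "D (Suc n) = diffs (D n)" for n by (simp add: D_def)
  define Bs where "Bs n = (\<Sum>k. norm (D n k))" for n
  have Bs0: "Bs n \<ge> 0" for n unfolding Bs_def by (intro suminf_nonneg Dsum) auto
  have Bsb: "Bs n \<le> A * (fact (n+2))^2 / a^(2*(n+2))" for n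
  proof -
    have "Bs n \<le> (\<Sum>m. real m ^ n * norm (c m))"
      unfolding Bs_def D_def by (rule diffs_iter_summable(2)[OF cs(1)])
    also have "\<dots> \<le> A * (fact (n+2))^2 / a^(2*(n+2))"
      using cs(2)[of n] by (simp add: A_def Z_def)
    finally show ?thesis .
  qed
  have ueq: "u x = Fs c (of_real (1-x))" if x: "x \<in> {0..1}" for x
  proof -
    have "(\<lambda>k. c (Suc k) * complex_of_real (1 - x) ^ Suc k) sums u x"
      using Hs x by (simp add: c_def)
    hence "(\<lambda>k. c k * complex_of_real (1 - x) ^ k) sums (u x + c 0 * complex_of_real (1 - x) ^ 0)"
      by (subst (asm) sums_Suc_iff)
    thus ?thesis by (simp add: c0 Fs_def sums_iff)
  qed
  have hasD: "((\<lambda>x. (-1)^n * Fs (D n) (of_real (1-x))) has_vector_derivative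
        ((-1)^Suc n * Fs (D (Suc n)) (of_real (1-x)))) (at x within {0..1})"
    if x: "x \<in> {0..1}" for n x
  proof -
    have "((\<lambda>x. Fs (D n) (of_real (1-x))) has_vector_derivative (- Fs (D (Suc n)) (of_real (1-x)))) (at x within {0..1})"
      unfolding DSuc by (rule P_deriv[OF Dsum Dsum[of "Suc n", unfolded DSuc] x])
    from has_vector_derivative_mult_right[OF this, of "(-1)^n"] show ?thesis by simp
  qed
  have dform: "\<forall>x\<in>{0..1}. dnth n u x = (-1)^n * Fs (D n) (of_real (1-x))" for n
  proof (induction n)
    case 0 thus ?case using ueq by (simp add: D_def)
  next
    case (Suc n)
    show ?case
    proof
      fix x :: real assume x: "x \<in> {0..1}"
      have "(dnth n u has_vector_derivative ((-1)^Suc n * Fs (D (Suc n)) (of_real (1-x)))) (at x within {0..1})"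
        by (rule has_vector_derivative_transform[OF x _ hasD[OF x]]) (use Suc in auto)
      thus "dnth (Suc n) u x = (-1)^Suc n * Fs (D (Suc n)) (of_real (1-x))"
        using vd01[OF x] by simp
    qed
  qed
  have dder: "(dnth n u has_vector_derivative dnth (Suc n) u x) (at x within {0..1})"
    if x: "x \<in> {0..1}" for n x
  proof -
    have "(dnth n u has_vector_derivative ((-1)^Suc n * Fs (D (Suc n)) (of_real (1-x)))) (at x within {0..1})"
      by (rule has_vector_derivative_transform[OF x _ hasD[OF x]]) (use dform in auto)
    moreover have "dnth (Suc n) u x = (-1)^Suc n * Fs (D (Suc n)) (of_real (1-x))"
      using dform[of "Suc n"] x by blast
    ultimately show ?thesis by simp
  qed
  have dbound: "norm (dnth n u x) \<le> Bs n" if x: "x \<in> {0..1}" for n x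
  proof -
    have "norm (complex_of_real (1-x)) \<le> 1" using x by (auto simp: cmod_def)
    thus ?thesis using dform[of n] x Fs_bound[OF Dsum] by (simp add: Bs_def norm_mult norm_power)
  qed
  have smooth: "smooth01 u" unfolding smooth01_def
    using dder by (metis differentiableI_vector)
  have u1: "u 1 = 0"
  proof -
    have "(\<lambda>k. H (Suc k) * complex_of_real (1 - 1) ^ Suc k) sums u 1" using Hs[rule_format, of 1] by simp
    thus ?thesis by (simp add: sums_iff)
  qed
  define T where "T n = \<sigma>^(2*n) * (real n + 1)^2 * (Bs (n+1))^2 / ((fact n)^2 * (fact (n+1))^2)" for n
  have KS: "summable T" unfolding T_def by (rule key_summable[OF s0 a0 sa A0 Bs0 Bsb])
  have T0: "T n \<ge> 0" for n unfolding T_def using s0 by simp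
  have d1: "dnth n (dnth 1 u) = dnth (n+1) u" for n using dnth_add[of n 1 u] by simp
  have snf: "sn_fin \<sigma> k (dnth 1 u)" if k: "k \<le> 2" for k
  proof -
    have bnd: "norm (sn_term \<sigma> k (dnth 1 u) n) \<le> (1+1/\<sigma>)^2 * T n" for n
    proof -
      define I where "I = integral {0..1} (\<lambda>x. (x/\<sigma>)^k * (cmod (dnth n (dnth 1 u) x))^2)"
      define E where "E = \<sigma>^(2*n) / ((fact n)^2 * (fact (n+1))^2)"
      have E0: "E \<ge> 0" using s0 by (simp add: E_def)
      have I: "0 \<le> I \<and> I \<le> (1/\<sigma>)^k * (Bs (n+1))^2"
        unfolding I_def
      proof (rule int01_bound)
        fix x :: real assume x: "x \<in> {0..1}"
        have p: "(x/\<sigma>)^k \<le> (1/\<sigma>)^k" using x s0 by (intro power_mono divide_right_mono) auto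
        have q: "(cmod (dnth n (dnth 1 u) x))^2 \<le> (Bs (n+1))^2"
          unfolding d1 using dbound[OF x, of "n+1"] by (intro power_mono) auto
        show "0 \<le> (x/\<sigma>)^k * (cmod (dnth n (dnth 1 u) x))^2 \<and> (x/\<sigma>)^k * (cmod (dnth n (dnth 1 u) x))^2 \<le> (1/\<sigma>)^k * (Bs (n+1))^2"
          using x s0 p q by (auto intro!: mult_mono)
      qed
      have w: "real n ^ k * (1/\<sigma>)^k \<le> (1+1/\<sigma>)^2 * (real n + 1)^2"
      proof -
        have "real n ^ k * (1/\<sigma>)^k = (real n/\<sigma>)^k" by (simp add: power_divide)
        also have "\<dots> \<le> (1 + real n/\<sigma>)^k" using s0 by (intro power_mono) auto
        also have "\<dots> \<le> (1 + real n/\<sigma>)^2" using s0 k by (intro power_increasing) auto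
        also have "\<dots> \<le> ((1+1/\<sigma>) * (real n + 1))^2"
        proof (intro power_mono)
          show "1 + real n/\<sigma> \<le> (1+1/\<sigma>) * (real n + 1)"
            using s0 by (simp add: field_simps)
        qed (use s0 in auto)
        finally show ?thesis by (simp add: power_mult_distrib)
      qed
      have st: "sn_term \<sigma> k (dnth 1 u) n = E * real n ^ k * I" by (simp add: sn_term_def E_def I_def)
      have nn: "E * real n ^ k * I \<ge> 0" using I E0 by simp
      have "norm (sn_term \<sigma> k (dnth 1 u) n) = E * real n ^ k * I" using st nn by simp
      also have "\<dots> \<le> E * real n ^ k * ((1/\<sigma>)^k * (Bs (n+1))^2)"
        using I E0 by (intro mult_left_mono) auto
      also have "\<dots> \<le> E * ((1+1/\<sigma>)^2 * (real n + 1)^2) * (Bs (n+1))^2"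
        using mult_right_mono[OF mult_left_mono[OF w E0], of "(Bs (n+1))^2"]
        by (simp add: mult.assoc)
      also have "\<dots> = (1+1/\<sigma>)^2 * T n"
        by (simp add: E_def T_def)
      finally show ?thesis .
    qed
    show ?thesis unfolding sn_fin_def
      by (rule summable_comparison_test[OF _ summable_mult[OF KS]]) (use bnd in auto)
  qed
  have bdf: "bd_fin \<sigma> (dnth 1 u)"
  proof -
    have bnd: "norm (\<sigma>^(2*n+1) / ((fact n)^2 * (fact (n+1))^2) * (cmod (dnth n (dnth 1 u) 0))^2) \<le> \<sigma> * T n" for n
    proof -
      have q: "(cmod (dnth n (dnth 1 u) 0))^2 \<le> (Bs (n+1))^2"
        unfolding d1 using dbound[of 0 "n+1"] by (intro power_mono) auto
      have "\<sigma>^(2*n+1) / ((fact n)^2 * (fact (n+1))^2) * (cmod (dnth n (dnth 1 u) 0))^2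
          \<le> \<sigma>^(2*n+1) / ((fact n)^2 * (fact (n+1))^2) * (Bs (n+1))^2"
        using q s0 by (intro mult_left_mono) auto
      also have "\<dots> \<le> \<sigma>^(2*n+1) / ((fact n)^2 * (fact (n+1))^2) * ((real n + 1)^2 * (Bs (n+1))^2)"
      proof -
        have one: "(1::real) \<le> (real n + 1)^2" by (rule one_le_power) simp
        have "(Bs (n+1))^2 \<le> (real n + 1)^2 * (Bs (n+1))^2"
          using mult_right_mono[OF one, of "(Bs (n+1))^2"] by simp
        thus ?thesis using s0 by (intro mult_left_mono) auto
      qed
      also have "\<dots> = \<sigma> * T n" by (simp add: T_def field_simps)
      finally show ?thesis using s0 by simp
    qed
    show ?thesis unfolding bd_fin_def
      by (rule summable_comparison_test[OF _ summable_mult[OF KS]]) (use bnd in auto)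
  qed
  have uX: "u \<in> Xsp \<sigma>" unfolding Xsp_def using smooth u1 snf bdf by simp
  have dcont: "continuous_on {0..1} (dnth n u)" for n
    unfolding continuous_on_eq_continuous_within
    using dder by (metis differentiableI_vector differentiable_imp_continuous_within)
  define Q where "Q x = complex_of_real (x^2) * dnth 2 u x + complex_of_real (2*x) * dnth 1 u x
      + s * dnth 1 u x - poly W (complex_of_real x) * u x" for x
  have LQ: "Lop W s u x = Q x" if x: "x \<in> {0..1}" for x
  proof -
    have d2: "(dnth 1 u has_vector_derivative dnth 2 u x) (at x within {0..1})"
      using dder[OF x, of 1] by (simp add: numeral_2_eq_2)
    have y2: "((\<lambda>y. complex_of_real (y^2)) has_vector_derivative complex_of_real (2*x)) (at x within {0..1})"
      by (rule has_vector_derivative_of_real) (auto intro!: derivative_eq_intros)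
    have "((\<lambda>y. complex_of_real (y^2) * dnth 1 u y) has_vector_derivative
          (complex_of_real (x^2) * dnth 2 u x + complex_of_real (2*x) * dnth 1 u x)) (at x within {0..1})"
      by (rule has_vector_derivative_mult[OF y2 d2])
    hence "vector_derivative (\<lambda>y. complex_of_real (y^2) * dnth 1 u y) (at x within {0..1})
        = complex_of_real (x^2) * dnth 2 u x + complex_of_real (2*x) * dnth 1 u x"
      by (rule vd01[OF x])
    thus ?thesis unfolding Lop_def Q_def by simp
  qed
  have Qc: "continuous_on {0..1} Q"
    unfolding Q_def using dcont[of 2] dcont[of 1] dcont[of 0]
    by (auto intro!: continuous_intros)
  have Lz: "\<forall>x\<in>{0..1}. Lop W s u x = 0"
  proof
    fix x :: real assume x: "x \<in> {0..1}"
    have "Q x = 0"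
    proof (rule continuous_constant_on_closure[of "{0<..<1}" Q])
      show "continuous_on (closure {0<..<1::real}) Q" using Qc by simp
      show "Q y = 0" if "y \<in> {0<..<1}" for y using HL LQ[of y] that by auto
      show "x \<in> closure {0<..<1::real}" using x by simp
    qed
    thus "Lop W s u x = 0" using LQ[OF x] by simp
  qed
  have ne: "\<exists>x\<in>{0..1}. u x \<noteq> 0" using assms(5) by auto
  show ?thesis
    using uX Lz ne zero_in_Ysp[OF Lz, of \<sigma>] unfolding Dsp_def by auto
qed
end
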